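(* For every approval-based multi-winner election $\sigma=\langle\mathcal V,\mathcal C,S,B\rangle$ and every non-empty $\mathcal A\subseteq\mathcal C$, there exists a non-empty $\mathcal K\subseteq\mathcal A$ with the following two properties: 1. $\mathrm{Supp}_F(c)=\mathrm{maxMin}(\sigma,\mathcal A)$ for every $F\in\mathfrak F^{\mathrm{opt}}_{\sigma,\mathcal A}$ and every $c\in\mathcal K$; 2. $\displaystyle\mathrm{maxMin}(\sigma,\mathcal A)=\frac{\sum_{y\in2^{\mathcal C}:\,y\cap\mathcal K\neq\emptyset}B(y)}{|\mathcal K|}$.
   Context: An approval-based multi-winner election is a tuple $\sigma=\langle \mathcal V,\mathcal C,S,B\rangle$, where $\mathcal V$ is a finite set of agents, $\mathcal C$ is a finite set of candidates, $1\le S\le|\mathcal C|$ is an integer, and $B:2^{\mathcal C}\to\mathbb N$ gives, for each $\mathcal A\subseteq\mathcal C$, the number $B(\mathcal A)$ of agents whose ballot is exactly $\mathcal A$ (with $\sum_{\mathcal A}B(\mathcal A)\le|\mathcal V|$). For a non-empty $\mathcal A\subseteq\mathcal C$, the family $\mathfrak F_{\sigma,\mathcal A}$ is the set of all $F:2^{\mathcal C}\times\mathcal A\to\mathbb R$ such that: - $F(y,c)\ge0$ for all $y$ and $c$; - $F(y,c)=0$ if $c\notin y$; - $\sum_{c\in\mathcal A\cap y}F(y,c)=B(y)$ whenever $y\cap\mathcal A\neq\emptyset$. We write $\mathrm{Supp}_F(c)=\sum_yF(y,c)$ and $\mathrm{maxMin}(\sigma,\mathcal A)=\sup_{F\in\mathfrak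 F_{\sigma,\mathcal A}}\min_{c\in\mathcal A}\mathrm{Supp}_F(c)$. We also write $\mathfrak F^{\mathrm{opt}}_{\sigma,\mathcal A}=\{F\in\mathfrak F_{\sigma,\mathcal A}:\mathrm{Supp}_F(c)\ge\mathrm{maxMin}(\sigma,\mathcal A)\ \forall c\in\mathcal A\}$. *)

theory Defs
  imports "HOL-Analysis.Analysis"
begin

text \<open>An approval-based multi-winner election <V, C, S, B>. The ballot function B is
  only meaningful on subsets of C (elements of Pow C).\<close>
definition election :: "'v set \<Rightarrow> 'c set \<Rightarrow> nat \<Rightarrow> ('c set \<Rightarrow> nat) \<Rightarrow> bool" where
  "election V C S B \<longleftrightarrow> finite V \<and> finite C \<and> 1 \<le> S \<and> S \<le> card C \<and>
     (\<Sum>y\<in>Pow C. B y) \<le> card V"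

text \<open>The family F_{sigma,A}: functions on 2^C x A (values outside this domain are ignored).\<close>
definition Ffam :: "'c set \<Rightarrow> ('c set \<Rightarrow> nat) \<Rightarrow> 'c set \<Rightarrow> ('c set \<Rightarrow> 'c \<Rightarrow> real) set" where
  "Ffam C B A = {F. (\<forall>y\<in>Pow C. \<forall>c\<in>A. F y c \<ge> 0) \<and>
                    (\<forall>y\<in>Pow C. \<forall>c\<in>A. c \<notin> y \<longrightarrow> F y c = 0) \<and>
                    (\<forall>y\<in>Pow C. y \<inter> A \<noteq> {} \<longrightarrow> (\<Sum>c\<in>A \<inter> y. F y c) = real (B y))}"

definition Supp :: "'c set \<Rightarrow> ('c set \<Rightarrow> 'c \<Rightarrow> real) \<Rightarrow> 'c \<Rightarrow> real" where
  "Supp C F c = (\<Sum>y\<in>Pow C. F y c)"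

definition maxMin :: "'c set \<Rightarrow> ('c set \<Rightarrow> nat) \<Rightarrow> 'c set \<Rightarrow> real" where
  "maxMin C B A = (SUP F\<in>Ffam C B A. Min ((\<lambda>c. Supp C F c) ` A))"

definition Fopt :: "'c set \<Rightarrow> ('c set \<Rightarrow> nat) \<Rightarrow> 'c set \<Rightarrow> ('c set \<Rightarrow> 'c \<Rightarrow> real) set" where
  "Fopt C B A = {F \<in> Ffam C B A. \<forall>c\<in>A. Supp C F c \<ge> maxMin C B A}"

end

theory Submission
  imports Defs
begin

definition WW :: "'i set \<Rightarrow> ('i \<Rightarrow> 'c set) \<Rightarrow> ('i \<Rightarrow> real) \<Rightarrow> 'c set \<Rightarrow> real" where
  "WW I N b K = (\<Sum>i\<in>{i\<in>I. N i \<inter> K \<noteq> {}}. b i)"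

definition hall :: "'i set \<Rightarrow> ('i \<Rightarrow> 'c set) \<Rightarrow> ('i \<Rightarrow> real) \<Rightarrow> 'c set \<Rightarrow> ('c \<Rightarrow> real) \<Rightarrow> bool" where
  "hall I N b A d \<longleftrightarrow> finite I \<and> finite A \<and> (\<forall>i\<in>I. 0 \<le> b i) \<and>
     (\<forall>K\<subseteq>A. (\<Sum>c\<in>K. d c) \<le> WW I N b K)"

definition sol :: "'i set \<Rightarrow> ('i \<Rightarrow> 'c set) \<Rightarrow> ('i \<Rightarrow> real) \<Rightarrow> 'c set \<Rightarrow> ('c \<Rightarrow> real) \<Rightarrow> bool" where
  "sol I N b A d \<longleftrightarrow> (\<exists>F::'i \<Rightarrow> 'c \<Rightarrow> real. (\<forall>i c. 0 \<le> F i c) \<and> (\<forall>i c. c \<notin> N i \<longrightarrow> F i c = 0) \<and>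
     (\<forall>i\<in>I. (\<Sum>c\<in>A. F i c) \<le> b i) \<and> (\<forall>c\<in>A. d c \<le> (\<Sum>i\<in>I. F i c)))"

lemma sum_upd:
  fixes f :: "'a \<Rightarrow> real"
  assumes "finite S"
  shows "sum (f(a:=v)) S = (if a \<in> S then sum f S - f a + v else sum f S)"
proof (cases "a \<in> S")
  case True
  have "sum (f(a:=v)) S = v + sum (f(a:=v)) (S - {a})" using sum.remove[OF assms True, of "f(a:=v)"] by simp
  also have "sum (f(a:=v)) (S - {a}) = sum f (S - {a})" by (rule sum.cong) auto
  also have "sum f (S - {a}) = sum f S - f a" using sum.remove[OF assms True, of f] by simp
  finally show ?thesis using True by simp
next
  case False
  then show ?thesis by (auto intro!: sum.cong)
qed

lemma WW_upd:
  assumes "finite I"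
  shows "WW I N (b(i0:=x)) K = (if i0 \<in> I \<and> N i0 \<inter> K \<noteq> {} then WW I N b K - b i0 + x else WW I N b K)"
  unfolding WW_def using assms by (subst sum_upd) auto

lemma drop_lemma:
  assumes IH: "\<And>I' A' b' d'. card I' + card A' < card I + card A \<Longrightarrow> hall I' N b' A' d' \<Longrightarrow> sol I' N b' A' d'"
    and h: "hall I N b A d" and c0: "c0 \<in> A" "d c0 \<le> 0"
  shows "sol I N b A d"
proof -
  have fA: "finite A" using h by (simp add: hall_def)
  have "hall I N b (A - {c0}) d" using h unfolding hall_def by auto
  moreover have "card (A - {c0}) < card A" by (rule card_Diff1_less[OF fA c0(1)])
  ultimately have "sol I N b (A - {c0}) d" using IH by simp
  then obtain F where F: "\<forall>i c. 0 \<le> F i c" "\<forall>i c. c \<notin> N i \<longrightarrow> F i c = 0"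
    "\<forall>i\<in>I. (\<Sum>c\<in>A - {c0}. F i c) \<le> b i" "\<forall>c\<in>A - {c0}. d c \<le> (\<Sum>i\<in>I. F i c)"
    unfolding sol_def by blast
  define G where "G i c = (if c = c0 then 0 else F i c)" for i c
  have "\<forall>i\<in>I. (\<Sum>c\<in>A. G i c) \<le> b i"
  proof
    fix i assume "i \<in> I"
    have "(\<Sum>c\<in>A. G i c) = G i c0 + (\<Sum>c\<in>A - {c0}. G i c)" using sum.remove[OF fA c0(1)] by blast
    also have "\<dots> = (\<Sum>c\<in>A - {c0}. F i c)" unfolding G_def by (auto intro!: sum.cong)
    finally show "(\<Sum>c\<in>A. G i c) \<le> b i" using F(3) \<open>i \<in> I\<close> by simp
  qed
  moreover have "\<forall>c\<in>A. d c \<le> (\<Sum>i\<in>I. G i c)"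
  proof
    fix c assume "c \<in> A"
    then show "d c \<le> (\<Sum>i\<in>I. G i c)" unfolding G_def by (cases "c = c0") (use F(4) c0 in auto)
  qed
  moreover have "\<forall>i c. 0 \<le> G i c" "\<forall>i c. c \<notin> N i \<longrightarrow> G i c = 0" using F(1,2) unfolding G_def by auto
  ultimately show ?thesis unfolding sol_def by blast
qed

lemma split_lemma:
  assumes IH: "\<And>I' A' b' d'. card I' + card A' < card I + card A \<Longrightarrow> hall I' N b' A' d' \<Longrightarrow> sol I' N b' A' d'"
    and h: "hall I N b A d" and K: "K \<noteq> {}" "K \<subseteq> A" "K \<noteq> A" "(\<Sum>c\<in>K. d c) = WW I N b K"
  shows "sol I N b A d"
proof -
  have fA: "finite A" and fI: "finite I" using h by (auto simp add: hall_def)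
  have fK: "finite K" using fA K(2) finite_subset by blast
  have "hall I N b K d" using h K(2) unfolding hall_def using fK by auto
  moreover have "card K < card A" using K fA by (meson psubsetI psubset_card_mono)
  ultimately have "sol I N b K d" using IH by simp
  then obtain F1 where F1: "\<forall>i c. 0 \<le> F1 i c" "\<forall>i c. c \<notin> N i \<longrightarrow> F1 i c = 0"
    "\<forall>i\<in>I. (\<Sum>c\<in>K. F1 i c) \<le> b i" "\<forall>c\<in>K. d c \<le> (\<Sum>i\<in>I. F1 i c)"
    unfolding sol_def by blast
  define I2 where "I2 = {i\<in>I. N i \<inter> K = {}}"
  have fI2: "finite I2" using fI unfolding I2_def by simp
  have h2: "hall I2 N b (A - K) d"
    unfolding hall_def
  proof (intro conjI allI impI)
    show "finite I2" by fact
    show "finite (A - K)" using fA by simp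
    show "\<forall>i\<in>I2. 0 \<le> b i" using h unfolding hall_def I2_def by auto
    fix L assume L: "L \<subseteq> A - K"
    have fL: "finite L" using L fA finite_subset by blast
    have dj: "L \<inter> K = {}" using L by auto
    have "(\<Sum>c\<in>L \<union> K. d c) = (\<Sum>c\<in>L. d c) + (\<Sum>c\<in>K. d c)"
      by (rule sum.union_disjoint) (use fL fK dj in auto)
    moreover have "(\<Sum>c\<in>L \<union> K. d c) \<le> WW I N b (L \<union> K)" proof -
      have "L \<union> K \<subseteq> A" using L K(2) by auto
      then show ?thesis using h unfolding hall_def by blast
    qed
    moreover have "WW I N b (L \<union> K) = WW I N b K + WW I2 N b L"
    proof -
      have "{i\<in>I. N i \<inter> (L \<union> K) \<noteq> {}} = {i\<in>I. N i \<inter> K \<noteq> {}} \<union> {i\<in>I2. N i \<inter> L \<noteq> {}}"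
        unfolding I2_def by auto
      moreover have "{i\<in>I. N i \<inter> K \<noteq> {}} \<inter> {i\<in>I2. N i \<inter> L \<noteq> {}} = {}"
        unfolding I2_def by auto
      ultimately show ?thesis unfolding WW_def
        by (simp add: sum.union_disjoint fI fI2)
    qed
    ultimately show "(\<Sum>c\<in>L. d c) \<le> WW I2 N b L" using K(4) by linarith
  qed
  moreover have "card I2 + card (A - K) < card I + card A"
  proof -
    have "card I2 \<le> card I" unfolding I2_def using fI by (intro card_mono) auto
    moreover have "card (A - K) < card A"
    proof -
      have "card K > 0" using K(1) fK by (simp add: card_gt_0_iff)
      moreover have "card (A - K) = card A - card K" using card_Diff_subset[OF fK K(2)] .
      moreover have "card K \<le> card A" using card_mono[OF fA K(2)] .
      ultimately show ?thesis by linarith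
    qed
    ultimately show ?thesis by simp
  qed
  ultimately have "sol I2 N b (A - K) d" using IH by simp
  then obtain F2 where F2: "\<forall>i c. 0 \<le> F2 i c" "\<forall>i c. c \<notin> N i \<longrightarrow> F2 i c = 0"
    "\<forall>i\<in>I2. (\<Sum>c\<in>A - K. F2 i c) \<le> b i" "\<forall>c\<in>A - K. d c \<le> (\<Sum>i\<in>I2. F2 i c)"
    unfolding sol_def by blast
  define G where "G i c = (if N i \<inter> K \<noteq> {} then (if c \<in> K then F1 i c else 0) else (if c \<in> K then 0 else F2 i c))" for i c
  have G1: "\<forall>i c. 0 \<le> G i c" "\<forall>i c. c \<notin> N i \<longrightarrow> G i c = 0" using F1 F2 unfolding G_def by auto
  have G3: "\<forall>i\<in>I. (\<Sum>c\<in>A. G i c) \<le> b i"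
  proof
    fix i assume i: "i \<in> I"
    show "(\<Sum>c\<in>A. G i c) \<le> b i"
    proof (cases "N i \<inter> K \<noteq> {}")
      case True
      have "(\<Sum>c\<in>A. G i c) = (\<Sum>c\<in>A. if c \<in> K then F1 i c else 0)" unfolding G_def using True by simp
      also have "\<dots> = (\<Sum>c\<in>A \<inter> K. F1 i c)" by (rule sum.inter_restrict[OF fA, symmetric])
      also have "A \<inter> K = K" using K(2) by auto
      finally show ?thesis using F1(3) i by simp
    next
      case False
      have "(\<Sum>c\<in>A. G i c) = (\<Sum>c\<in>A. if c \<in> A - K then F2 i c else 0)" unfolding G_def using False
        by (intro sum.cong) auto
      also have "\<dots> = (\<Sum>c\<in>A \<inter> (A - K). F2 i c)" by (rule sum.inter_restrict[OF fA, symmetric])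
      also have "A \<inter> (A - K) = A - K" by auto
      finally show ?thesis using F2(3) i False unfolding I2_def by simp
    qed
  qed
  have G4: "\<forall>c\<in>A. d c \<le> (\<Sum>i\<in>I. G i c)"
  proof
    fix c assume c: "c \<in> A"
    show "d c \<le> (\<Sum>i\<in>I. G i c)"
    proof (cases "c \<in> K")
      case True
      have "(\<Sum>i\<in>I. G i c) = (\<Sum>i\<in>I. F1 i c)" unfolding G_def using True F1(2)
        by (intro sum.cong) auto
      then show ?thesis using F1(4) True by simp
    next
      case False
      have "(\<Sum>i\<in>I. G i c) = (\<Sum>i\<in>I. if i \<in> I2 then F2 i c else 0)" unfolding G_def I2_def using False
        by (intro sum.cong) auto
      also have "\<dots> = (\<Sum>i\<in>I \<inter> I2. F2 i c)" by (rule sum.inter_restrict[OF fI, symmetric])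
      also have "I \<inter> I2 = I2" unfolding I2_def by auto
      finally show ?thesis using F2(4) False c by simp
    qed
  qed
  show ?thesis unfolding sol_def using G1 G3 G4 by blast
qed

lemma lift_lemma:
  assumes s: "sol I N (b(i0 := b i0 - t)) A (d(c0 := d c0 - t))"
    and fI: "finite I" and fA: "finite A" and i0: "i0 \<in> I" and c0: "c0 \<in> A" "c0 \<in> N i0" and t: "0 \<le> t"
  shows "sol I N b A d"
proof -
  obtain F where F: "\<forall>i c. 0 \<le> F i c" "\<forall>i c. c \<notin> N i \<longrightarrow> F i c = 0"
    "\<forall>i\<in>I. (\<Sum>c\<in>A. F i c) \<le> (b(i0 := b i0 - t)) i" "\<forall>c\<in>A. (d(c0 := d c0 - t)) c \<le> (\<Sum>i\<in>I. F i c)"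
    using s unfolding sol_def by blast
  define G where "G i c = F i c + (if i = i0 \<and> c = c0 then t else 0)" for i c
  have G1: "\<forall>i c. 0 \<le> G i c" "\<forall>i c. c \<notin> N i \<longrightarrow> G i c = 0" using F(1,2) t c0 unfolding G_def by auto
  have G3: "\<forall>i\<in>I. (\<Sum>c\<in>A. G i c) \<le> b i"
  proof
    fix i assume i: "i \<in> I"
    have "(\<Sum>c\<in>A. G i c) = (\<Sum>c\<in>A. F i c) + (\<Sum>c\<in>A. if i = i0 \<and> c = c0 then t else 0)"
      unfolding G_def by (rule sum.distrib)
    also have "(\<Sum>c\<in>A. if i = i0 \<and> c = c0 then t else 0) = (if i = i0 then t else 0)"
      using fA c0 by (cases "i = i0") auto
    finally show "(\<Sum>c\<in>A. G i c) \<le> b i" using F(3) i by (cases "i = i0") auto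
  qed
  have G4: "\<forall>c\<in>A. d c \<le> (\<Sum>i\<in>I. G i c)"
  proof
    fix c assume c: "c \<in> A"
    have "(\<Sum>i\<in>I. G i c) = (\<Sum>i\<in>I. F i c) + (\<Sum>i\<in>I. if i = i0 \<and> c = c0 then t else 0)"
      unfolding G_def by (rule sum.distrib)
    also have "(\<Sum>i\<in>I. if i = i0 \<and> c = c0 then t else 0) = (if c = c0 then t else 0)"
      using fI i0 by (cases "c = c0") auto
    finally show "d c \<le> (\<Sum>i\<in>I. G i c)" using F(4) c by (cases "c = c0") auto
  qed
  show ?thesis unfolding sol_def using G1 G3 G4 by blast
qed

lemma remove_zero_hall:
  assumes h: "hall I N b A d" and z: "b i0 = 0"
  shows "hall (I - {i0}) N b A d"
proof -
  have "WW (I - {i0}) N b K = WW I N b K" for K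
  proof -
    have "{i \<in> I - {i0}. N i \<inter> K \<noteq> {}} = {i \<in> I. N i \<inter> K \<noteq> {}} - {i0}" by auto
    moreover have "finite I" using h by (simp add: hall_def)
    ultimately show ?thesis unfolding WW_def using z by (simp add: sum_diff1)
  qed
  then show ?thesis using h unfolding hall_def by auto
qed

lemma remove_zero_sol:
  assumes s: "sol (I - {i0}) N b A d" and fI: "finite I" and z: "0 \<le> b i0"
  shows "sol I N b A d"
proof -
  obtain F where F: "\<forall>i c. 0 \<le> F i c" "\<forall>i c. c \<notin> N i \<longrightarrow> F i c = 0"
    "\<forall>i\<in>I - {i0}. (\<Sum>c\<in>A. F i c) \<le> b i" "\<forall>c\<in>A. d c \<le> (\<Sum>i\<in>I - {i0}. F i c)"
    using s unfolding sol_def by blast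
  define G where "G i c = (if i = i0 then 0 else F i c)" for i c
  have G1: "\<forall>i c. 0 \<le> G i c" "\<forall>i c. c \<notin> N i \<longrightarrow> G i c = 0" using F(1,2) unfolding G_def by auto
  have G3: "\<forall>i\<in>I. (\<Sum>c\<in>A. G i c) \<le> b i"
  proof
    fix i assume "i \<in> I"
    then show "(\<Sum>c\<in>A. G i c) \<le> b i" using F(3) z unfolding G_def by (cases "i = i0") auto
  qed
  have "(\<Sum>i\<in>I. G i c) = (\<Sum>i\<in>I - {i0}. F i c)" for c
  proof -
    have "(\<Sum>i\<in>I. G i c) = (\<Sum>i\<in>I - {i0}. G i c)"
      using sum_diff1[of I "\<lambda>i. G i c" i0] fI unfolding G_def by (simp split: if_splits)
    also have "\<dots> = (\<Sum>i\<in>I - {i0}. F i c)" unfolding G_def by (rule sum.cong) auto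
    finally show ?thesis .
  qed
  then have G4: "\<forall>c\<in>A. d c \<le> (\<Sum>i\<in>I. G i c)" using F(4) by simp
  show ?thesis unfolding sol_def using G1 G3 G4 by blast
qed

lemma hall_sol: "hall I N b A d \<Longrightarrow> sol I N b A d"
proof (induction "card I + card A" arbitrary: I A b d rule: less_induct)
  case less
  note IH = less.hyps
  have h: "hall I N b A d" by fact
  have fA: "finite A" and fI: "finite I" and bnn: "\<forall>i\<in>I. 0 \<le> b i"
    and hk: "\<forall>K\<subseteq>A. (\<Sum>c\<in>K. d c) \<le> WW I N b K" using h by (auto simp: hall_def)
  show ?case
  proof (cases "A = {}")
    case True
    show ?thesis unfolding sol_def using True bnn by (intro exI[of _ "\<lambda>i c. 0"]) auto
  next
    case Ane: False
    show ?thesis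
    proof (cases "\<exists>c0\<in>A. d c0 \<le> 0")
      case True
      then obtain c0 where "c0 \<in> A" "d c0 \<le> 0" by blast
      then show ?thesis using drop_lemma[OF IH h] by blast
    next
      case dpos: False
      show ?thesis
      proof (cases "\<exists>K. K \<noteq> {} \<and> K \<subseteq> A \<and> K \<noteq> A \<and> (\<Sum>c\<in>K. d c) = WW I N b K")
        case True
        then obtain K where "K \<noteq> {}" "K \<subseteq> A" "K \<noteq> A" "(\<Sum>c\<in>K. d c) = WW I N b K" by blast
        then show ?thesis using split_lemma[OF IH h] by blast
      next
        case notight: False
        have strict: "(\<Sum>c\<in>K. d c) < WW I N b K" if "K \<noteq> {}" "K \<subseteq> A" "K \<noteq> A" for K
        proof -
          have "(\<Sum>c\<in>K. d c) \<le> WW I N b K" using hk that(2) by blast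
          moreover have "(\<Sum>c\<in>K. d c) \<noteq> WW I N b K" using notight that by blast
          ultimately show ?thesis by linarith
        qed
        obtain c0 where c0: "c0 \<in> A" using Ane by blast
        have "\<not> d c0 \<le> 0" using dpos c0 by blast
        then have dc0: "d c0 > 0" by simp
        have "d c0 \<le> WW I N b {c0}" using hk c0 by auto
        then have "0 < (\<Sum>i\<in>{i\<in>I. N i \<inter> {c0} \<noteq> {}}. b i)" using dc0 unfolding WW_def by linarith
        then obtain i0 where i0: "i0 \<in> I" "c0 \<in> N i0" "b i0 > 0"
        proof -
          assume r: "\<And>i0. i0 \<in> I \<Longrightarrow> c0 \<in> N i0 \<Longrightarrow> 0 < b i0 \<Longrightarrow> thesis"
          assume p: "0 < (\<Sum>i\<in>{i\<in>I. N i \<inter> {c0} \<noteq> {}}. b i)"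
          show thesis
          proof (rule ccontr)
            assume "\<not> thesis"
            have "\<forall>i\<in>{i\<in>I. N i \<inter> {c0} \<noteq> {}}. b i \<le> 0"
            proof
              fix i assume "i \<in> {i\<in>I. N i \<inter> {c0} \<noteq> {}}"
              then have "i \<in> I" "c0 \<in> N i" by auto
              then show "b i \<le> 0" using r \<open>\<not> thesis\<close> by (meson not_less)
            qed
            then have "(\<Sum>i\<in>{i\<in>I. N i \<inter> {c0} \<noteq> {}}. b i) \<le> 0" by (meson sum_nonpos)
            then show False using p by linarith
          qed
        qed
        define Ks where "Ks = {K. K \<subseteq> A - {c0} \<and> N i0 \<inter> K \<noteq> {}}"
        define slack where "slack K = WW I N b K - (\<Sum>c\<in>K. d c)" for K
        define T where "T = insert (b i0) (insert (d c0) (slack ` Ks))"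
        define t where "t = Min T"
        have fKs: "finite Ks" unfolding Ks_def using fA by (auto intro: finite_subset[of _ "Pow (A - {c0})"])
        have fT: "finite T" unfolding T_def using fKs by simp
        have Tne: "T \<noteq> {}" unfolding T_def by simp
        have slackpos: "slack K > 0" if "K \<in> Ks" for K
          using strict[of K] that c0 unfolding Ks_def slack_def by auto
        have tpos: "t > 0" unfolding t_def using fT Tne slackpos dc0 i0 by (auto simp: T_def)
        have tb: "t \<le> b i0" unfolding t_def by (rule Min_le[OF fT]) (simp add: T_def)
        have td: "t \<le> d c0" unfolding t_def by (rule Min_le[OF fT]) (simp add: T_def)
        have tK: "t \<le> slack K" if "K \<in> Ks" for K unfolding t_def by (rule Min_le[OF fT]) (simp add: T_def that)
        define b' where "b' = b(i0 := b i0 - t)"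
        define d' where "d' = d(c0 := d c0 - t)"
        have Wb': "WW I N b' K = (if N i0 \<inter> K \<noteq> {} then WW I N b K - t else WW I N b K)" for K
          unfolding b'_def using WW_upd[OF fI, of N b i0 "b i0 - t" K] i0 by simp
        have sd': "(\<Sum>c\<in>K. d' c) = (if c0 \<in> K then (\<Sum>c\<in>K. d c) - t else (\<Sum>c\<in>K. d c))" if "finite K" for K
          unfolding d'_def using sum_upd[OF that, of d c0 "d c0 - t"] by simp
        have h': "hall I N b' A d'"
          unfolding hall_def
        proof (intro conjI allI impI)
          show "finite I" "finite A" by fact+
          show "\<forall>i\<in>I. 0 \<le> b' i" using bnn tb unfolding b'_def by auto
          fix K assume K: "K \<subseteq> A"
          have fK: "finite K" using K fA finite_subset by blast
          show "(\<Sum>c\<in>K. d' c) \<le> WW I N b' K"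
          proof (cases "c0 \<in> K")
            case True
            then have "N i0 \<inter> K \<noteq> {}" using i0 by auto
            then show ?thesis using sd'[OF fK] Wb'[of K] True hk K by auto
          next
            case False
            show ?thesis
            proof (cases "N i0 \<inter> K \<noteq> {}")
              case True
              then have "K \<in> Ks" unfolding Ks_def using K False by auto
              then show ?thesis using tK[of K] sd'[OF fK] Wb'[of K] True False unfolding slack_def by auto
            next
              case nt: False
              then show ?thesis using sd'[OF fK] Wb'[of K] False hk K by auto
            qed
          qed
        qed
        have "sol I N b' A d'"
        proof (cases "t = b i0")
          case True
          then have "b' i0 = 0" unfolding b'_def by simp
          then have "hall (I - {i0}) N b' A d'" using remove_zero_hall[OF h'] by blast
          moreover have "card (I - {i0}) < card I" using card_Diff1_less[OF fI i0(1)] .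
          ultimately have "sol (I - {i0}) N b' A d'" using IH by simp
          then show ?thesis by (rule remove_zero_sol[OF _ fI]) (simp add: \<open>b' i0 = 0\<close>)
        next
          case tnb: False
          show ?thesis
          proof (cases "t = d c0")
            case True
            then have "d' c0 \<le> 0" unfolding d'_def by simp
            then show ?thesis using drop_lemma[OF IH h' c0] by blast
          next
            case False
            have "t \<in> T" unfolding t_def using fT Tne by (rule Min_in)
            then obtain K where K: "K \<in> Ks" "t = slack K" using False tnb unfolding T_def by auto
            have KA: "K \<subseteq> A" "c0 \<notin> K" "N i0 \<inter> K \<noteq> {}" using K(1) unfolding Ks_def by auto
            have fK: "finite K" using KA fA finite_subset by blast
            have "(\<Sum>c\<in>K. d' c) = WW I N b' K"
              using sd'[OF fK] Wb'[of K] KA K(2) unfolding slack_def by auto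
            moreover have "K \<noteq> {}" "K \<noteq> A" using KA c0 by auto
            ultimately show ?thesis using split_lemma[OF IH h'] KA by blast
          qed
        qed
        then have "sol I N (b(i0 := b i0 - t)) A (d(c0 := d c0 - t))" unfolding b'_def d'_def .
        from lift_lemma[OF this fI fA i0(1) c0 i0(2)] tpos show ?thesis by simp
      qed
    qed
  qed
qed

lemma supp_sum_le:
  fixes C :: "'c set" and B :: "'c set \<Rightarrow> nat"
  assumes fC: "finite C" and AC: "A \<subseteq> C" and F: "F \<in> Ffam C B A" and KA: "K \<subseteq> A"
  shows "(\<Sum>c\<in>K. Supp C F c) \<le> (\<Sum>y\<in>{y\<in>Pow C. y \<inter> K \<noteq> {}}. real (B y))"
proof -
  have fA: "finite A" using fC AC finite_subset by blast
  have fK: "finite K" using fA KA finite_subset by blast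
  have F1: "\<forall>y\<in>Pow C. \<forall>c\<in>A. F y c \<ge> 0" and F2: "\<forall>y\<in>Pow C. \<forall>c\<in>A. c \<notin> y \<longrightarrow> F y c = 0"
    and F3: "\<forall>y\<in>Pow C. y \<inter> A \<noteq> {} \<longrightarrow> (\<Sum>c\<in>A \<inter> y. F y c) = real (B y)"
    using F unfolding Ffam_def by auto
  have "(\<Sum>c\<in>K. Supp C F c) = (\<Sum>y\<in>Pow C. \<Sum>c\<in>K. F y c)"
    unfolding Supp_def by (rule sum.swap)
  also have "\<dots> \<le> (\<Sum>y\<in>Pow C. if y \<inter> K \<noteq> {} then real (B y) else 0)"
  proof (rule sum_mono)
    fix y assume y: "y \<in> Pow C"
    show "(\<Sum>c\<in>K. F y c) \<le> (if y \<inter> K \<noteq> {} then real (B y) else 0)"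
    proof (cases "y \<inter> K \<noteq> {}")
      case True
      have "(\<Sum>c\<in>K. F y c) = (\<Sum>c\<in>K \<inter> y. F y c)"
        by (rule sum.mono_neutral_right) (use fK F2 y KA in auto)
      also have "\<dots> \<le> (\<Sum>c\<in>A \<inter> y. F y c)"
        by (rule sum_mono2) (use fA F1 y KA in auto)
      also have "\<dots> = real (B y)" using F3 y True KA by auto
      finally show ?thesis using True by simp
    next
      case False
      have "(\<Sum>c\<in>K. F y c) = 0"
      proof (rule sum.neutral, rule ballI)
        fix c assume "c \<in> K"
        then have "c \<in> A" "c \<notin> y" using KA False by auto
        then show "F y c = 0" using F2 y by blast
      qed
      then show ?thesis using False by simp
    qed
  qed
  also have "\<dots> = (\<Sum>y\<in>Pow C \<inter> {y. y \<inter> K \<noteq> {}}. real (B y))"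
    using fC by (simp add: sum.inter_restrict)
  also have "Pow C \<inter> {y. y \<inter> K \<noteq> {}} = {y\<in>Pow C. y \<inter> K \<noteq> {}}" by auto
  finally show ?thesis .
qed

theorem corollary1:
  fixes V :: "'v set" and C :: "'c set" and S :: nat and B :: "'c set \<Rightarrow> nat"
    and A :: "'c set"
  assumes "election V C S B"
    and "A \<noteq> {}" and "A \<subseteq> C"
  shows "\<exists>K. K \<noteq> {} \<and> K \<subseteq> A \<and>
           (\<forall>F\<in>Fopt C B A. \<forall>c\<in>K. Supp C F c = maxMin C B A) \<and>
           maxMin C B A = (\<Sum>y\<in>{y\<in>Pow C. y \<inter> K \<noteq> {}}. real (B y)) / real (card K)"
proof -
  have fC: "finite C" using assms(1) unfolding election_def by simp
  have AC: "A \<subseteq> C" and Ane: "A \<noteq> {}" using assms by auto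
  have fA: "finite A" using fC AC finite_subset by blast
  define W0 where "W0 K = (\<Sum>y\<in>{y\<in>Pow C. y \<inter> K \<noteq> {}}. real (B y))" for K
  define ratio where "ratio K = W0 K / real (card K)" for K
  define Ks where "Ks = {K. K \<subseteq> A \<and> K \<noteq> {}}"
  have fKs: "finite Ks" unfolding Ks_def using fA by (auto intro: finite_subset[of _ "Pow A"])
  have Ksne: "Ks \<noteq> {}" unfolding Ks_def using Ane by blast
  define \<mu> where "\<mu> = Min (ratio ` Ks)"
  have "\<mu> \<in> ratio ` Ks" unfolding \<mu>_def using fKs Ksne by simp
  then obtain K0 where K0: "K0 \<in> Ks" "ratio K0 = \<mu>" by auto
  have mule: "\<mu> \<le> ratio K" if "K \<in> Ks" for K unfolding \<mu>_def using fKs that by simp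
  have cardpos: "real (card K) > 0" if "K \<in> Ks" for K
    using that fA unfolding Ks_def by (auto simp: card_gt_0_iff intro: finite_subset)
  define m where "m F = Min ((\<lambda>c. Supp C F c) ` A)" for F
  have mupper: "m F \<le> \<mu>" if F: "F \<in> Ffam C B A" for F
  proof -
    have K0A: "K0 \<subseteq> A" using K0 unfolding Ks_def by auto
    have "(\<Sum>c\<in>K0. m F) \<le> (\<Sum>c\<in>K0. Supp C F c)"
      by (rule sum_mono) (use K0A fA in \<open>auto simp: m_def\<close>)
    also have "\<dots> \<le> W0 K0" unfolding W0_def by (rule supp_sum_le[OF fC AC F K0A])
    finally have "real (card K0) * m F \<le> W0 K0" by simp
    then have "m F \<le> ratio K0" unfolding ratio_def using cardpos[OF K0(1)]
      by (simp add: pos_le_divide_eq mult.commute)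
    then show ?thesis using K0 by simp
  qed
  \<comment> \<open>lower bound via fractional Hall\<close>
  have h: "hall (Pow C) (\<lambda>y. y) (\<lambda>y. real (B y)) A (\<lambda>c. \<mu>)"
    unfolding hall_def
  proof (intro conjI allI impI ballI)
    show "finite (Pow C)" using fC by simp
    show "finite A" by fact
    fix y show "0 \<le> real (B y)" by simp
  next
    fix K assume K: "K \<subseteq> A"
    show "(\<Sum>c\<in>K. \<mu>) \<le> WW (Pow C) (\<lambda>y. y) (\<lambda>y. real (B y)) K"
    proof (cases "K = {}")
      case True then show ?thesis unfolding WW_def by simp
    next
      case False
      then have KK: "K \<in> Ks" using K unfolding Ks_def by auto
      have "\<mu> \<le> W0 K / real (card K)" using mule[OF KK] unfolding ratio_def .
      then have "real (card K) * \<mu> \<le> W0 K" using cardpos[OF KK]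
        by (simp add: pos_le_divide_eq mult.commute)
      then show ?thesis unfolding WW_def W0_def by simp
    qed
  qed
  obtain F where F: "\<forall>i c. 0 \<le> F i c" "\<forall>i c. c \<notin> i \<longrightarrow> F i c = 0"
    "\<forall>i\<in>Pow C. (\<Sum>c\<in>A. F i c) \<le> real (B i)" "\<forall>c\<in>A. \<mu> \<le> (\<Sum>i\<in>Pow C. F i c)"
    using hall_sol[OF h] unfolding sol_def by blast
  define sel where "sel y = (SOME x. x \<in> A \<inter> y)" for y :: "'c set"
  define G where "G y c = (if c \<in> A \<inter> y then F y c + (if c = sel y then real (B y) - (\<Sum>c'\<in>A. F y c') else 0) else 0)" for y c
  have GF: "F y c \<le> G y c" if "y \<in> Pow C" "c \<in> A" for y c
    using F(1,2) F(3) that unfolding G_def by auto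
  have GFfam: "G \<in> Ffam C B A"
    unfolding Ffam_def
  proof (intro CollectI conjI ballI impI)
    fix y c assume y: "y \<in> Pow C" and c: "c \<in> A"
    show "0 \<le> G y c" using F(1) F(3) y unfolding G_def by auto
    show "c \<notin> y \<Longrightarrow> G y c = 0" unfolding G_def by auto
  next
    fix y assume y: "y \<in> Pow C" and ne: "y \<inter> A \<noteq> {}"
    have fAy: "finite (A \<inter> y)" using fA by simp
    have s: "sel y \<in> A \<inter> y" unfolding sel_def using ne by (metis Int_commute ex_in_conv someI_ex)
    have "(\<Sum>c\<in>A \<inter> y. G y c) = (\<Sum>c\<in>A \<inter> y. F y c + (if c = sel y then real (B y) - (\<Sum>c'\<in>A. F y c') else 0))"
      unfolding G_def by (rule sum.cong) auto
    also have "\<dots> = (\<Sum>c\<in>A \<inter> y. F y c) + (real (B y) - (\<Sum>c'\<in>A. F y c'))"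
      using s fAy by (simp add: sum.distrib)
    also have "(\<Sum>c\<in>A \<inter> y. F y c) = (\<Sum>c\<in>A. F y c)"
      by (rule sum.mono_neutral_left) (use fA F(2) in auto)
    finally show "(\<Sum>c\<in>A \<inter> y. G y c) = real (B y)" by simp
  qed
  have Gsupp: "\<mu> \<le> Supp C G c" if "c \<in> A" for c
  proof -
    have "(\<Sum>i\<in>Pow C. F i c) \<le> Supp C G c" unfolding Supp_def using GF that by (intro sum_mono) auto
    then show ?thesis using F(4) that by force
  qed
  have mG: "\<mu> \<le> m G" unfolding m_def using fA Ane Gsupp by simp
  have bdd: "bdd_above (m ` Ffam C B A)" using mupper by (intro bdd_aboveI2) 
  have mm: "maxMin C B A = \<mu>"
  proof (rule antisym)
    show "maxMin C B A \<le> \<mu>" unfolding maxMin_def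
      using mupper GFfam unfolding m_def by (intro cSUP_least) auto
    have "m G \<le> maxMin C B A" unfolding maxMin_def m_def
      using cSUP_upper[OF GFfam bdd] unfolding m_def .
    then show "\<mu> \<le> maxMin C B A" using mG by simp
  qed
  have K0A: "K0 \<subseteq> A" "K0 \<noteq> {}" using K0 unfolding Ks_def by auto
  have fK0: "finite K0" using K0A fA finite_subset by blast
  have W0K0: "W0 K0 = real (card K0) * \<mu>"
    using K0(2) cardpos[OF K0(1)] unfolding ratio_def by (simp add: field_simps)
  have P1: "\<forall>F\<in>Fopt C B A. \<forall>c\<in>K0. Supp C F c = maxMin C B A"
  proof (intro ballI)
    fix F c assume F: "F \<in> Fopt C B A" and c: "c \<in> K0"
    have Ff: "F \<in> Ffam C B A" and ge: "\<forall>c\<in>A. \<mu> \<le> Supp C F c" using F mm unfolding Fopt_def by auto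
    show "Supp C F c = maxMin C B A"
    proof (rule ccontr)
      assume "Supp C F c \<noteq> maxMin C B A"
      then have "\<mu> < Supp C F c" using ge c K0A mm by force
      then have "(\<Sum>c\<in>K0. \<mu>) < (\<Sum>c\<in>K0. Supp C F c)"
        using sum_strict_mono_ex1[OF fK0, of "\<lambda>_. \<mu>" "\<lambda>c. Supp C F c"] ge K0A c by blast
      moreover have "(\<Sum>c\<in>K0. Supp C F c) \<le> W0 K0" unfolding W0_def by (rule supp_sum_le[OF fC AC Ff K0A(1)])
      ultimately show False using W0K0 by simp
    qed
  qed
  show ?thesis
    apply (rule exI[of _ K0])
    using K0A P1 mm K0(2) unfolding ratio_def W0_def by simp
qed

end
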